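(* Let $\psi:\mathbb R^d\to\mathbb R^d$ be differentiable and bijective, and suppose there are constants $0\le\mathfrak m_1<\infty$ and $0\le\mathfrak m_2<1$ such that $\|\psi(v)-v\|\le\mathfrak m_1$ and $\|\nabla\psi(v)-I\|_{op}\le\mathfrak m_2$ for all $v\in\mathbb R^d$. Then \[ \mathsf{KL}(\psi_\#\boldsymbol\gamma_d\,\|\,\boldsymbol\gamma_d)\le\frac12\mathfrak m_1^2+\frac{d\,\mathfrak m_2^2}{2(1-\mathfrak m_2)}. \]
   Context: $\boldsymbol\gamma_d=\mathcal N(0,I_d)$ is the standard Gaussian on $\mathbb R^d$; $\psi_\#\boldsymbol\gamma_d$ is its pushforward under $\psi$; $\|\cdot\|_{op}$ is the Euclidean operator norm. $\mathsf{KL}(\mu\|\pi)=\mathbb E_\mu[\log\frac{d\mu}{d\pi}]$ if $\mu\ll\pi$, else $+\infty$. *)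

theory Defs
  imports "HOL-Probability.Probability"
begin

definition std_gaussian :: "'a::euclidean_space measure" where
  "std_gaussian = density lborel
     (\<lambda>x. ennreal ((2 * pi) powr (- real DIM('a) / 2) * exp (- (norm x)\<^sup>2 / 2)))"

definition pushforward :: "('a::euclidean_space \<Rightarrow> 'a) \<Rightarrow> 'a measure \<Rightarrow> 'a measure" where
  "pushforward f M = distr M borel f"

end

theory Submission
  imports Defs "HOL-Computational_Algebra.Fundamental_Theorem_Algebra" "HOL-Analysis.Analysis"
begin

lemma ln_lower_pos:
  fixes x :: real assumes "0 \<le> x" shows "x - x\<^sup>2 / 2 \<le> ln (1 + x)"
proof -
  let ?f = "\<lambda>t::real. ln (1 + t) - t + t\<^sup>2 / 2"
  have "?f 0 \<le> ?f x"
  proof (rule DERIV_nonneg_imp_nondecreasing[OF assms])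
    fix t :: real assume t: "0 \<le> t" "t \<le> x"
    have "(?f has_real_derivative (1 / (1 + t) - 1 + t)) (at t)"
      using t by (auto intro!: derivative_eq_intros simp: power2_eq_square)
    moreover have "0 \<le> 1 / (1 + t) - 1 + t"
    proof -
      have "1 / (1 + t) - 1 + t = t\<^sup>2 / (1 + t)" using t by (simp add: field_simps power2_eq_square)
      then show ?thesis using t by simp
    qed
    ultimately show "\<exists>y. (?f has_real_derivative y) (at t) \<and> 0 \<le> y" by blast
  qed
  then show ?thesis by simp
qed

lemma ln_lower_neg:
  fixes y :: real assumes "0 \<le> y" "y < 1" shows "- y - y\<^sup>2 / (2 * (1 - y)) \<le> ln (1 - y)"
proof -
  let ?f = "\<lambda>t::real. ln (1 - t) + t + t\<^sup>2 / (2 * (1 - t))"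
  have "?f 0 \<le> ?f y"
  proof (rule DERIV_nonneg_imp_nondecreasing[OF assms(1)])
    fix t :: real assume t: "0 \<le> t" "t \<le> y"
    then have t1: "t < 1" using assms by simp
    have "(?f has_real_derivative (- 1 / (1 - t) + 1 + (2 * t * (2 * (1 - t)) + t\<^sup>2 * 2) / (2 * (1 - t))\<^sup>2)) (at t)"
      using t1 by (auto intro!: derivative_eq_intros simp: power2_eq_square)
    moreover have "- 1 / (1 - t) + 1 + (2 * t * (2 * (1 - t)) + t\<^sup>2 * 2) / (2 * (1 - t))\<^sup>2 = t\<^sup>2 / (2 * (1 - t)\<^sup>2)"
    proof -
      define a where "a = 1 - t"
      have a: "a \<noteq> 0" "t = 1 - a" using t1 by (auto simp: a_def)
      show ?thesis unfolding a_def[symmetric] using a(1) unfolding a(2)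
        by (simp add: field_simps power2_eq_square)
    qed
    ultimately show "\<exists>y. (?f has_real_derivative y) (at t) \<and> 0 \<le> y" by fastforce
  qed
  then show ?thesis by simp
qed

lemma scalar_bound:
  fixes x r :: real assumes "\<bar>x\<bar> \<le> r" "r < 1"
  shows "x - ln (1 + x) \<le> r\<^sup>2 / (2 * (1 - r))"
proof (cases "0 \<le> x")
  case True
  have "x - ln (1 + x) \<le> x\<^sup>2 / 2" using ln_lower_pos[OF True] by simp
  also have "\<dots> \<le> r\<^sup>2 / 2" using assms True by (simp add: power_mono)
  also have "\<dots> \<le> r\<^sup>2 / (2 * (1 - r))"
    using assms True by (simp add: divide_left_mono field_simps)
  finally show ?thesis .
next
  case False
  define y where "y = - x"
  have y: "0 \<le> y" "y \<le> r" "y < 1" using assms False by (auto simp: y_def)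
  have "x - ln (1 + x) = - y - ln (1 - y)" by (simp add: y_def)
  also have "\<dots> \<le> y\<^sup>2 / (2 * (1 - y))" using ln_lower_neg[of y] y by simp
  also have "\<dots> \<le> r\<^sup>2 / (2 * (1 - r))"
  proof (rule frac_le)
    show "y\<^sup>2 \<le> r\<^sup>2" using y by (simp add: power_mono)
    show "0 < 2 * (1 - r)" using y assms by simp
    show "2 * (1 - r) \<le> 2 * (1 - y)" using y by simp
  qed (simp)
  finally show ?thesis .
qed

lemma complex_scalar_bounds:
  fixes l :: complex and r :: real
  assumes "cmod l \<le> r" "r < 1"
  shows "0 < cmod (1 + l)"
    and "Re l - ln (cmod (1 + l)) \<le> r\<^sup>2 / (2 * (1 - r))"
    and "ln (cmod (1 + l)) \<le> r"
    and "ln (1 - r) \<le> ln (cmod (1 + l))"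
proof -
  have a: "\<bar>Re l\<bar> \<le> r" using abs_Re_le_cmod[of l] assms by linarith
  have b: "1 + Re l \<le> cmod (1 + l)"
    using abs_Re_le_cmod[of "1 + l"] by simp
  have c: "1 - r \<le> cmod (1 + l)"
    using norm_triangle_ineq2[of 1 "-l"] assms by (simp add: norm_minus_commute)
  show pos: "0 < cmod (1 + l)" using c assms by linarith
  have "ln (1 + Re l) \<le> ln (cmod (1 + l))"
    using b a assms by (subst ln_le_cancel_iff) auto
  then show "Re l - ln (cmod (1 + l)) \<le> r\<^sup>2 / (2 * (1 - r))"
    using scalar_bound[OF a assms(2)] by linarith
  have "cmod (1 + l) \<le> 1 + r" using norm_triangle_ineq[of 1 l] assms by simp
  moreover have "0 \<le> r" using assms by (meson norm_ge_zero order_trans)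
  ultimately have "ln (cmod (1 + l)) \<le> ln (1 + r)" using pos by (subst ln_le_cancel_iff) auto
  also have "\<dots> \<le> r" using assms by (intro ln_add_one_self_le_self) (meson norm_ge_zero order_trans)
  finally show "ln (cmod (1 + l)) \<le> r" .
  show "ln (1 - r) \<le> ln (cmod (1 + l))" using c assms by (subst ln_le_cancel_iff) auto
qed

lemma mset_bounds:
  fixes L :: "complex multiset" and r :: real
  assumes "\<forall>l\<in>#L. cmod l \<le> r" "0 \<le> r" "r < 1"
  shows "0 < cmod (\<Prod>l\<in>#L. 1 + l)
    \<and> Re (sum_mset L) - ln (cmod (\<Prod>l\<in>#L. 1 + l)) \<le> real (size L) * (r\<^sup>2 / (2 * (1 - r)))
    \<and> ln (cmod (\<Prod>l\<in>#L. 1 + l)) \<le> real (size L) * r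
    \<and> real (size L) * ln (1 - r) \<le> ln (cmod (\<Prod>l\<in>#L. 1 + l))"
  using assms(1)
proof (induction L)
  case empty
  then show ?case by simp
next
  case (add x L)
  then have IH: "0 < cmod (\<Prod>l\<in>#L. 1 + l)"
    "Re (sum_mset L) - ln (cmod (\<Prod>l\<in>#L. 1 + l)) \<le> real (size L) * (r\<^sup>2 / (2 * (1 - r)))"
    "ln (cmod (\<Prod>l\<in>#L. 1 + l)) \<le> real (size L) * r"
    "real (size L) * ln (1 - r) \<le> ln (cmod (\<Prod>l\<in>#L. 1 + l))" by auto
  have xr: "cmod x \<le> r" using add.prems by simp
  note S = complex_scalar_bounds[OF xr assms(3)]
  define P where "P = (\<Prod>l\<in>#L. 1 + l)"
  have pe: "(\<Prod>l\<in>#add_mset x L. 1 + l) = (1 + x) * P" by (simp add: P_def)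
  have eq: "ln (cmod ((1 + x) * P)) = ln (cmod (1 + x)) + ln (cmod P)"
    using S(1) IH(1) by (simp add: norm_mult ln_mult P_def)
  have pos: "0 < cmod ((1 + x) * P)" using S(1) IH(1) by (simp add: norm_mult P_def)
  have sz: "real (size (add_mset x L)) = 1 + real (size L)" by simp
  have sm: "Re (sum_mset (add_mset x L)) = Re x + Re (sum_mset L)" by simp
  define h where "h = r\<^sup>2 / (2 * (1 - r))"
  have "Re x - ln (cmod (1 + x)) \<le> h" "Re (sum_mset L) - ln (cmod P) \<le> real (size L) * h"
    using S(2) IH(2) by (auto simp: h_def P_def)
  then have c1: "Re (sum_mset (add_mset x L)) - ln (cmod ((1 + x) * P)) \<le> real (size (add_mset x L)) * h"
    unfolding eq sz sm by (simp add: algebra_simps)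
  have "ln (cmod (1 + x)) \<le> r" "ln (cmod P) \<le> real (size L) * r"
    using S(3) IH(3) by (auto simp: P_def)
  then have c2: "ln (cmod ((1 + x) * P)) \<le> real (size (add_mset x L)) * r"
    unfolding eq sz by (simp add: algebra_simps)
  have "ln (1 - r) \<le> ln (cmod (1 + x))" "real (size L) * ln (1 - r) \<le> ln (cmod P)"
    using S(4) IH(4) by (auto simp: P_def)
  then have c3: "real (size (add_mset x L)) * ln (1 - r) \<le> ln (cmod ((1 + x) * P))"
    unfolding eq sz by (simp add: algebra_simps)
  show ?case unfolding pe using pos c1 c2 c3 by (simp only: h_def)
qed


lemma poly_factor_one:
  fixes P :: "complex poly"
  assumes "poly P 0 = 1"
  shows "\<exists>L. P = (\<Prod>l\<in>#L. [:1, l:]) \<and> size L = degree P"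
  using assms
proof (induction "degree P" arbitrary: P rule: less_induct)
  case less
  show ?case
  proof (cases "degree P = 0")
    case True
    then obtain c where "P = [:c:]" by (metis degree_eq_zeroE)
    with less.prems have "P = 1" by (simp add: one_pCons)
    then show ?thesis by (intro exI[of _ "{#}"]) simp
  next
    case False
    then have "\<not> constant (poly P)" by (simp add: constant_degree)
    then obtain z where z: "poly P z = 0" using fundamental_theorem_of_algebra by blast
    have z0: "z \<noteq> 0" using z less.prems by auto
    have "[:-z, 1:] dvd P" using z by (simp add: poly_eq_0_iff_dvd)
    then obtain Q where PQ: "P = [:-z, 1:] * Q" by (elim dvdE)
    have Q0: "Q \<noteq> 0" using PQ less.prems by auto
    define Q' where "Q' = smult (-z) Q"
    have "smult (-z) [:1, -1/z:] = [:-z, 1:]" using z0 by simp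
    then have PQ': "P = [:1, -1/z:] * Q'" unfolding PQ Q'_def
      by (metis mult_smult_left mult_smult_right)
    have Q'0: "poly Q' 0 = 1" using less.prems PQ by (simp add: Q'_def)
    have "degree P = degree Q + 1" by (subst PQ, subst degree_mult_eq) (use Q0 in auto)
    moreover have "degree Q' = degree Q" using z0 by (simp add: Q'_def)
    ultimately have degQ: "degree Q' < degree P" by simp
    obtain L where L: "Q' = (\<Prod>l\<in>#L. [:1, l:])" "size L = degree Q'"
      using less.hyps[OF degQ Q'0] by blast
    show ?thesis
      using L PQ' degQ \<open>degree P = degree Q + 1\<close> \<open>degree Q' = degree Q\<close>
      by (intro exI[of _ "add_mset (-1/z) L"]) simp
  qed
qed

lemma coeff_prod_lin_mset:
  fixes L :: "complex multiset"
  shows "coeff (\<Prod>l\<in>#L. [:1, l:]) 1 = sum_mset L \<and> coeff (\<Prod>l\<in>#L. [:1, l:]) 0 = 1"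
proof (induction L)
  case empty
  then show ?case by simp
next
  case (add x L)
  then show ?case by (simp add: coeff_mult atMost_Suc)
qed

lemma coeff_prod_lin:
  fixes c d :: "'i \<Rightarrow> 'a::comm_ring_1"
  assumes "finite S"
  shows "coeff (\<Prod>i\<in>S. [:c i, d i:]) 1 = (\<Sum>i\<in>S. d i * (\<Prod>j\<in>S-{i}. c j))
       \<and> coeff (\<Prod>i\<in>S. [:c i, d i:]) 0 = (\<Prod>i\<in>S. c i)"
  using assms
proof (induction S rule: finite_induct)
  case empty
  then show ?case by simp
next
  case (insert x F)
  have e: "\<And>i. i \<in> F \<Longrightarrow> insert x F - {i} = insert x (F - {i})" using insert.hyps by auto
  have "(\<Sum>i\<in>F. d i * (\<Prod>j\<in>insert x F-{i}. c j)) = (\<Sum>i\<in>F. c x * (d i * (\<Prod>j\<in>F-{i}. c j)))"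
    using insert.hyps by (intro sum.cong refl) (simp add: e algebra_simps)
  moreover have "insert x F - {x} = F" using insert.hyps by auto
  ultimately show ?case using insert
    by (simp add: coeff_mult atMost_Suc sum_distrib_left algebra_simps)
qed

definition charp :: "real^'n^'n \<Rightarrow> complex poly" where
  "charp A = det (\<chi> i j. [: of_bool (i = j), complex_of_real (A$i$j) :])"

lemma poly_charp: "poly (charp A) w = det (\<chi> i j. of_bool (i = j) + w * complex_of_real (A$i$j))"
  unfolding charp_def det_def by (simp add: poly_sum poly_prod)

lemma poly_charp_0: "poly (charp (A::real^'n^'n)) 0 = 1"
proof -
  have "((\<chi> i j. of_bool (i = j)) :: complex^'n^'n) = mat 1"
    by (simp add: mat_def vec_eq_iff)
  then show ?thesis by (simp add: poly_charp det_I)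
qed

lemma poly_charp_1: "poly (charp A) 1 = complex_of_real (det (mat 1 + A))"
  unfolding poly_charp det_def of_real_sum
  apply (intro sum.cong refl)
  apply (simp add: of_real_prod)
  apply (intro arg_cong2[where f = "(*)"] refl prod.cong)
  by (auto simp: mat_def)

lemma degree_charp: "degree (charp (A::real^'n^'n)) \<le> CARD('n)"
  unfolding charp_def det_def
proof (rule degree_sum_le)
  fix p assume "p \<in> {p. p permutes (UNIV::'n set)}"
  have "degree (\<Prod>i\<in>UNIV. (\<chi> i j. [:of_bool (i = j), complex_of_real (A $ i $ j):]) $ i $ p i)
     \<le> (\<Sum>i\<in>UNIV. degree ((\<chi> i j. [:of_bool (i = j), complex_of_real (A $ i $ j):]) $ i $ p i))"
    by (rule degree_prod_sum_le[unfolded o_def]) simp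
  also have "\<dots> \<le> (\<Sum>i\<in>(UNIV::'n set). 1)"
    by (intro sum_mono) simp
  finally have "degree (\<Prod>i\<in>UNIV. (\<chi> i j. [:of_bool (i = j), complex_of_real (A $ i $ j):]) $ i $ p i) \<le> CARD('n)"
    by simp
  then show "degree (of_int (sign p) * (\<Prod>i\<in>UNIV. (\<chi> i j. [:of_bool (i = j), complex_of_real (A $ i $ j):]) $ i $ p i)) \<le> CARD('n)"
    by (metis (no_types, lifting) degree_mult_le degree_of_int add_0 order_trans)
qed (simp)

lemma coeff_charp: "coeff (charp (A::real^'n^'n)) 1 = complex_of_real (trace A)"
proof -
  let ?E = "\<lambda>p i. [:of_bool (i = p i), complex_of_real (A $ i $ p i):]"
  have "coeff (charp A) 1 = (\<Sum>p | p permutes (UNIV::'n set). of_int (sign p) * coeff (\<Prod>i\<in>UNIV. ?E p i) 1)"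
    unfolding charp_def det_def by (simp add: coeff_sum of_int_poly)
  also have "\<dots> = (\<Sum>p | p permutes (UNIV::'n set). if p = id then complex_of_real (trace A) else 0)"
  proof (rule sum.cong[OF refl])
    fix p assume p: "p \<in> {p. p permutes (UNIV::'n set)}"
    have cp: "coeff (\<Prod>i\<in>UNIV. ?E p i) 1 = (\<Sum>i\<in>UNIV. complex_of_real (A $ i $ p i) * (\<Prod>j\<in>UNIV-{i}. of_bool (j = p j)))"
      using coeff_prod_lin[of UNIV "\<lambda>i. of_bool (i = p i)" "\<lambda>i. complex_of_real (A $ i $ p i)"] by simp
    show "of_int (sign p) * coeff (\<Prod>i\<in>UNIV. ?E p i) 1 = (if p = id then complex_of_real (trace A) else 0)"
    proof (cases "p = id")
      case True
      then show ?thesis unfolding cp by (simp add: sign_id trace_def of_real_sum)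
    next
      case False
      have pz: "(\<Prod>j\<in>UNIV-{i}. of_bool (j = p j) :: complex) = 0" for i
      proof -
        have "\<exists>j. j \<noteq> i \<and> p j \<noteq> j"
        proof -
          obtain k where k: "p k \<noteq> k" using False by (metis eq_id_iff)
          show ?thesis
          proof (cases "k = i")
            case False then show ?thesis using k by blast
          next
            case True
            have "p (p i) \<noteq> p i"
            proof
              assume "p (p i) = p i"
              then have "p i = i" using p permutes_inj[of p UNIV] by (simp add: inj_eq)
              then show False using k True by simp
            qed
            then show ?thesis using k True by metis
          qed
        qed
        then obtain j where "j \<noteq> i" "p j \<noteq> j" by blast
        then show ?thesis by (intro prod_zero) (auto intro!: bexI[of _ j])
      qed
      show ?thesis unfolding cp using False by (simp only: pz mult_zero_right sum.neutral_const if_False)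
    qed
  qed
  also have "\<dots> = complex_of_real (trace A)"
    by (simp add: permutes_id)
  finally show ?thesis .
qed


lemma root_bound:
  fixes A :: "real^'n^'n"
  assumes bnd: "\<And>v. norm (A *v v) \<le> r * norm v" and r0: "0 \<le> r"
    and root: "poly (charp A) w = 0"
  shows "1 \<le> r * cmod w"
proof -
  define M :: "complex^'n^'n" where "M = (\<chi> i j. of_bool (i = j) + w * complex_of_real (A$i$j))"
  have "det M = 0" using root by (simp add: poly_charp M_def)
  then have "\<not> inj ((*v) M)"
    using det_nz_iff_inj_gen[of "(*v) M"] by (simp add: matrix_vector_mul_linear_gen matrix_of_matrix_vector_mul)
  then obtain v where v: "M *v v = 0" "v \<noteq> 0"
    using vec.linear_inj_iff_eq_0[OF matrix_vector_mul_linear_gen[of M]] by blast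
  define u where "u = (\<lambda>i. \<Sum>j\<in>UNIV. complex_of_real (A$i$j) * v$j)"
  have vu: "v$i = - w * u i" for i
  proof -
    have "(M *v v)$i = (\<Sum>j\<in>UNIV. of_bool (i = j) * v$j) + w * u i"
      by (simp add: M_def matrix_vector_mult_def u_def sum.distrib sum_distrib_left algebra_simps)
    also have "(\<Sum>j\<in>UNIV. of_bool (i = j) * v$j) = v$i"
    proof -
      have "(\<Sum>j\<in>UNIV. of_bool (i = j) * v$j) = (\<Sum>j\<in>UNIV. if i = j then v$j else 0)"
        by (intro sum.cong) auto
      then show ?thesis by simp
    qed
    finally show ?thesis using v(1) by (simp add: algebra_simps eq_neg_iff_add_eq_0)
  qed
  define a :: "real^'n" where "a = (\<chi> j. Re (v$j))"
  define b :: "real^'n" where "b = (\<chi> j. Im (v$j))"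
  have Reu: "Re (u i) = (A *v a)$i" and Imu: "Im (u i) = (A *v b)$i" for i
    by (simp_all add: u_def matrix_vector_mult_def a_def b_def Re_sum Im_sum)
  have pt: "(cmod (v$i))\<^sup>2 = (cmod w)\<^sup>2 * (((A *v a)$i)\<^sup>2 + ((A *v b)$i)\<^sup>2)" for i
    using vu[of i] by (simp add: norm_mult power_mult_distrib cmod_power2 Reu Imu)
  have nsq: "(norm x)\<^sup>2 = (\<Sum>i\<in>UNIV. (x$i)\<^sup>2)" for x :: "real^'n"
    by (simp only: power2_norm_eq_inner) (simp add: inner_vec_def power2_eq_square)
  have S1: "(norm a)\<^sup>2 + (norm b)\<^sup>2 = (\<Sum>i\<in>UNIV. (cmod (v$i))\<^sup>2)"
    by (simp add: nsq cmod_power2 a_def b_def sum.distrib)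
  also have "\<dots> = (cmod w)\<^sup>2 * ((norm (A *v a))\<^sup>2 + (norm (A *v b))\<^sup>2)"
    by (simp add: pt nsq sum_distrib_left sum.distrib algebra_simps)
  also have "\<dots> \<le> (cmod w)\<^sup>2 * (r\<^sup>2 * ((norm a)\<^sup>2 + (norm b)\<^sup>2))"
  proof -
    have "(norm (A *v a))\<^sup>2 \<le> (r * norm a)\<^sup>2" using bnd[of a] by (simp add: power_mono)
    moreover have "(norm (A *v b))\<^sup>2 \<le> (r * norm b)\<^sup>2" using bnd[of b] by (simp add: power_mono)
    ultimately show ?thesis by (intro mult_left_mono) (auto simp: power_mult_distrib algebra_simps)
  qed
  finally have ineq: "(norm a)\<^sup>2 + (norm b)\<^sup>2 \<le> ((r * cmod w))\<^sup>2 * ((norm a)\<^sup>2 + (norm b)\<^sup>2)"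
    by (simp add: power_mult_distrib algebra_simps)
  have "0 < (norm a)\<^sup>2 + (norm b)\<^sup>2"
  proof -
    obtain i where "v$i \<noteq> 0" using v(2) by (metis vec_eq_iff zero_index)
    then have "0 < (cmod (v$i))\<^sup>2" by simp
    also have "\<dots> \<le> (\<Sum>i\<in>UNIV. (cmod (v$i))\<^sup>2)" by (rule member_le_sum) auto
    finally show ?thesis using S1 by simp
  qed
  then have "1\<^sup>2 \<le> (r * cmod w)\<^sup>2" using ineq by simp
  then show ?thesis by (rule power2_le_imp_le) (use r0 in simp)
qed

lemma det_key:
  fixes A :: "real^'n^'n"
  assumes bnd: "\<And>v. norm (A *v v) \<le> r * norm v" and r0: "0 \<le> r" and r1: "r < 1"
  shows "det (mat 1 + A) \<noteq> 0
    \<and> trace A - ln \<bar>det (mat 1 + A)\<bar> \<le> real CARD('n) * (r\<^sup>2 / (2 * (1 - r)))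
    \<and> ln \<bar>det (mat 1 + A)\<bar> \<le> real CARD('n) * r
    \<and> real CARD('n) * ln (1 - r) \<le> ln \<bar>det (mat 1 + A)\<bar>"
proof -
  obtain L where L: "charp A = (\<Prod>l\<in>#L. [:1, l:])" "size L = degree (charp A)"
    using poly_factor_one[OF poly_charp_0] by blast
  have szL: "size L \<le> CARD('n)" using L(2) degree_charp[of A] by simp
  have Lr: "\<forall>l\<in>#L. cmod l \<le> r"
  proof
    fix l assume l: "l \<in># L"
    show "cmod l \<le> r"
    proof (cases "l = 0")
      case True then show ?thesis using r0 by simp
    next
      case False
      have "poly (charp A) (-1/l) = (\<Prod>l'\<in>#L. poly [:1, l':] (-1/l))"
        unfolding L(1) by (simp add: poly_prod_mset)
      also have "\<dots> = 0"
        using l False by (auto simp: prod_mset_zero_iff)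
      finally have "1 \<le> r * cmod (-1/l)" by (rule root_bound[OF bnd r0])
      then show ?thesis using False by (simp add: norm_divide field_simps)
    qed
  qed
  note MB = mset_bounds[OF Lr r0 r1]
  have det_eq: "complex_of_real (det (mat 1 + A)) = (\<Prod>l\<in>#L. 1 + l)"
    using poly_charp_1[of A] unfolding L(1) by (simp add: poly_prod_mset)
  have absdet: "\<bar>det (mat 1 + A)\<bar> = cmod (\<Prod>l\<in>#L. 1 + l)"
    by (metis det_eq norm_of_real)
  have tr: "trace A = Re (sum_mset L)"
    using coeff_charp[of A] coeff_prod_lin_mset[of L] unfolding L(1) by (metis Re_complex_of_real)
  define h where "h = r\<^sup>2 / (2 * (1 - r))"
  have h0: "0 \<le> h" using r1 by (simp add: h_def)
  have "real (size L) * h \<le> real CARD('n) * h" using szL h0 by (simp add: mult_right_mono)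
  moreover have "real (size L) * r \<le> real CARD('n) * r" using szL r0 by (simp add: mult_right_mono)
  moreover have "real CARD('n) * ln (1 - r) \<le> real (size L) * ln (1 - r)"
    using szL r0 r1 by (intro mult_right_mono_neg) auto
  ultimately show ?thesis using MB unfolding absdet tr h_def[symmetric]
    by (auto simp: absdet[symmetric])
qed


typedef (overloaded) ('a::euclidean_space) bidx = "Basis :: 'a set"
  using nonempty_Basis by blast

lemma Rep_bidx_image: "range (Rep_bidx :: 'a::euclidean_space bidx \<Rightarrow> 'a) = Basis"
  using type_definition.Rep_range[OF type_definition_bidx] by simp

lemma inj_Rep_bidx: "inj Rep_bidx"
  by (meson Rep_bidx_inject injI)

instance bidx :: (euclidean_space) finite
proof
  have "(UNIV :: 'a bidx set) = Abs_bidx ` Basis"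
    using type_definition.Abs_image[OF type_definition_bidx] by metis
  then show "finite (UNIV :: 'a bidx set)" by (metis finite_Basis finite_imageI)
qed

definition bidx_nat :: "'a::euclidean_space bidx \<Rightarrow> nat" where
  "bidx_nat i = to_nat_on (Basis :: 'a set) (Rep_bidx i)"

lemma inj_bidx_nat: "inj bidx_nat"
proof (rule injI)
  fix i j :: "'a bidx" assume "bidx_nat i = bidx_nat j"
  then have "Rep_bidx i = Rep_bidx j"
    using inj_on_to_nat_on[of "Basis :: 'a set"] Rep_bidx[of i] Rep_bidx[of j]
    unfolding bidx_nat_def by (meson countable_finite finite_Basis inj_onD)
  then show "i = j" by (simp add: Rep_bidx_inject)
qed

instantiation bidx :: (euclidean_space) wellorder
begin
definition less_eq_bidx :: "'a bidx \<Rightarrow> 'a bidx \<Rightarrow> bool" where "less_eq_bidx i j = (bidx_nat i \<le> bidx_nat j)"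
definition less_bidx :: "'a bidx \<Rightarrow> 'a bidx \<Rightarrow> bool" where "less_bidx i j = (bidx_nat i < bidx_nat j)"
instance
proof
  fix x y z :: "'a bidx"
  show "(x < y) = (x \<le> y \<and> \<not> y \<le> x)" by (auto simp: less_eq_bidx_def less_bidx_def)
  show "x \<le> x" by (simp add: less_eq_bidx_def)
  show "x \<le> y \<Longrightarrow> y \<le> z \<Longrightarrow> x \<le> z" by (simp add: less_eq_bidx_def)
  show "x \<le> y \<Longrightarrow> y \<le> x \<Longrightarrow> x = y"
    unfolding less_eq_bidx_def using inj_bidx_nat by (meson antisym injD)
  show "x \<le> y \<or> y \<le> x" by (auto simp: less_eq_bidx_def)
next
  fix P :: "'a bidx \<Rightarrow> bool" and a
  assume H: "\<And>x. (\<And>y. y < x \<Longrightarrow> P y) \<Longrightarrow> P x"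
  show "P a"
    by (induction a rule: measure_induct_rule[of bidx_nat]) (rule H, simp add: less_bidx_def)
qed
end

definition Tv :: "'a::euclidean_space \<Rightarrow> real^('a bidx)" where
  "Tv x = (\<chi> i. x \<bullet> Rep_bidx i)"

definition Ti :: "real^('a::euclidean_space bidx) \<Rightarrow> 'a" where
  "Ti v = (\<Sum>i\<in>UNIV. v$i *\<^sub>R Rep_bidx i)"

lemma inner_Rep_bidx: "Rep_bidx i \<bullet> Rep_bidx j = (if i = j then 1 else 0)"
  using Rep_bidx[of i] Rep_bidx[of j] inner_Basis[of "Rep_bidx i" "Rep_bidx j"]
  by (simp add: Rep_bidx_inject)

lemma Ti_inner: "Ti v \<bullet> Rep_bidx j = v$j"
proof -
  have "Ti v \<bullet> Rep_bidx j = (\<Sum>i\<in>UNIV. v$i * (if i = j then 1 else 0))"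
    by (simp add: Ti_def inner_sum_left inner_Rep_bidx)
  also have "\<dots> = v$j" by (simp add: if_distrib cong: if_cong)
  finally show ?thesis .
qed

lemma Tv_Ti[simp]: "Tv (Ti v) = v"
  by (simp add: Tv_def Ti_inner vec_eq_iff)

lemma Ti_Tv[simp]: "Ti (Tv x) = x"
proof -
  have "Ti (Tv x) = (\<Sum>i\<in>UNIV. (x \<bullet> Rep_bidx i) *\<^sub>R Rep_bidx i)"
    by (simp add: Ti_def Tv_def)
  also have "\<dots> = (\<Sum>b\<in>Basis. (x \<bullet> b) *\<^sub>R b)"
    by (rule sym, rule sum.reindex_cong[OF inj_Rep_bidx Rep_bidx_image[symmetric]]) simp
  also have "\<dots> = x" by (rule euclidean_representation)
  finally show ?thesis .
qed

lemma linear_Tv: "linear Tv"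
  by (rule linearI) (simp_all add: Tv_def vec_eq_iff inner_add_left)

lemma linear_Ti: "linear Ti"
  by (rule linearI) (simp_all add: Ti_def scaleR_add_left sum.distrib scaleR_sum_right)

lemma bounded_linear_Tv: "bounded_linear Tv"
  using linear_Tv linear_conv_bounded_linear by blast

lemma bounded_linear_Ti: "bounded_linear Ti"
  using linear_Ti linear_conv_bounded_linear by blast

lemma norm_Ti: "norm (Ti v) = norm v"
proof -
  have "(norm (Ti v))\<^sup>2 = Ti v \<bullet> Ti v" by (simp add: power2_norm_eq_inner)
  also have "\<dots> = (\<Sum>i\<in>UNIV. v$i * (Rep_bidx i \<bullet> Ti v))"
    by (simp add: Ti_def inner_sum_left)
  also have "\<dots> = v \<bullet> v" by (simp add: inner_commute Ti_inner inner_vec_def)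
  also have "\<dots> = (norm v)\<^sup>2" by (simp add: power2_norm_eq_inner)
  finally show ?thesis by simp
qed

lemma norm_Tv: "norm (Tv x) = norm x"
  using norm_Ti[of "Tv x"] by simp

lemma Tv_component: "Tv x $ i = x \<bullet> Rep_bidx i"
  by (simp add: Tv_def)

lemma measurable_Ti[measurable]: "Ti \<in> borel_measurable borel"
  by (intro borel_measurable_continuous_onI linear_continuous_on bounded_linear_Ti)

lemma measurable_Tv[measurable]: "Tv \<in> borel_measurable borel"
  by (intro borel_measurable_continuous_onI linear_continuous_on bounded_linear_Tv)

lemma Basis_vec_axis: "(Basis :: (real^'n) set) = range (\<lambda>i. axis i 1)"
  by (auto simp: Basis_vec_def)

lemma lborel_Ti: "distr lborel borel Ti = (lborel :: 'a::euclidean_space measure)"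
proof (rule lborel_eqI[symmetric])
  fix l u :: 'a assume lu: "\<And>b. b \<in> Basis \<Longrightarrow> l \<bullet> b \<le> u \<bullet> b"
  have pre: "Ti -` box l u = box (Tv l) (Tv u)"
  proof -
    have "Ti v \<in> box l u \<longleftrightarrow> v \<in> box (Tv l) (Tv u)" for v
    proof -
      have "Ti v \<in> box l u \<longleftrightarrow> (\<forall>b\<in>range Rep_bidx. l \<bullet> b < Ti v \<bullet> b \<and> Ti v \<bullet> b < u \<bullet> b)"
        by (simp add: mem_box Rep_bidx_image)
      also have "\<dots> \<longleftrightarrow> (\<forall>i. (Tv l)$i < v$i \<and> v$i < (Tv u)$i)"
        by (simp add: Ti_inner Tv_component)
      also have "\<dots> \<longleftrightarrow> v \<in> box (Tv l) (Tv u)" by (simp add: mem_box_cart)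
      finally show ?thesis .
    qed
    then show ?thesis by auto
  qed
  have le: "\<And>j. j \<in> Basis \<Longrightarrow> Tv l \<bullet> j \<le> Tv u \<bullet> j"
    using lu Rep_bidx by (auto simp: Basis_vec_axis cart_eq_inner_axis[symmetric] Tv_component Rep_bidx)
  have "emeasure (distr lborel borel Ti) (box l u) = emeasure lborel (box (Tv l) (Tv u))"
    by (simp add: emeasure_distr pre)
  also have "\<dots> = (\<Prod>j\<in>Basis. (Tv u - Tv l) \<bullet> j)"
    using le by (rule emeasure_lborel_box)
  also have "(\<Prod>j\<in>Basis. (Tv u - Tv l) \<bullet> j) = (\<Prod>i\<in>UNIV. (Tv u - Tv l) \<bullet> axis i 1)"
    unfolding Basis_vec_axis by (rule prod.reindex_cong[of "\<lambda>i. axis i 1"]) (auto intro!: injI simp: axis_eq_axis)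
  also have "\<dots> = (\<Prod>i\<in>UNIV. (u - l) \<bullet> Rep_bidx i)"
    by (simp add: cart_eq_inner_axis[symmetric] Tv_component inner_diff_left)
  also have "\<dots> = (\<Prod>b\<in>Basis. (u - l) \<bullet> b)"
    by (rule sym, rule prod.reindex_cong[OF inj_Rep_bidx Rep_bidx_image[symmetric]]) simp
  finally show "emeasure (distr lborel borel Ti) (box l u) = (\<Prod>b\<in>Basis. (u - l) \<bullet> b)" .
qed simp


definition Jac :: "('a::euclidean_space \<Rightarrow> 'a) \<Rightarrow> real" where
  "Jac L = det (matrix (\<lambda>w. Tv (L (Ti w))))"

lemma lborel_abs_int:
  fixes h :: "'b::euclidean_space \<Rightarrow> real"
  assumes [measurable]: "h \<in> borel_measurable borel"
  shows "h absolutely_integrable_on UNIV \<longleftrightarrow> integrable lborel h"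
proof -
  have "h absolutely_integrable_on UNIV \<longleftrightarrow> integrable lebesgue h"
    by (simp add: set_integrable_def)
  also have "\<dots> \<longleftrightarrow> integrable lborel h"
    by (rule integrable_completion) simp
  finally show ?thesis .
qed

lemma integrable_Ti_iff:
  fixes H :: "'a::euclidean_space \<Rightarrow> real"
  assumes [measurable]: "H \<in> borel_measurable borel"
  shows "integrable lborel (\<lambda>v. H (Ti v)) \<longleftrightarrow> integrable lborel H"
proof -
  have "integrable lborel H \<longleftrightarrow> integrable (distr lborel borel Ti) H" by (simp add: lborel_Ti)
  also have "\<dots> \<longleftrightarrow> integrable lborel (\<lambda>v. H (Ti v))"
    by (rule integrable_distr_eq) simp_all
  finally show ?thesis by simp
qed

lemma integral_Ti:
  fixes H :: "'a::euclidean_space \<Rightarrow> real"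
  assumes [measurable]: "H \<in> borel_measurable borel"
  shows "integral\<^sup>L lborel (\<lambda>v. H (Ti v)) = integral\<^sup>L lborel H"
proof -
  have "integral\<^sup>L lborel H = integral\<^sup>L (distr lborel borel Ti) H" by (simp add: lborel_Ti)
  also have "\<dots> = integral\<^sup>L lborel (\<lambda>v. H (Ti v))"
    by (rule integral_distr) simp_all
  finally show ?thesis by simp
qed

lemma cov:
  fixes \<psi> :: "'a::euclidean_space \<Rightarrow> 'a" and F :: "'a \<Rightarrow> real"
  assumes bij: "bij \<psi>" and der: "\<And>x. (\<psi> has_derivative \<psi>' x) (at x)"
    and F[measurable]: "F \<in> borel_measurable borel"
    and G[measurable]: "(\<lambda>x. \<bar>Jac (\<psi>' x)\<bar> * F (\<psi> x)) \<in> borel_measurable borel"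
    and int: "integrable lborel (\<lambda>x. \<bar>Jac (\<psi>' x)\<bar> * F (\<psi> x))"
  shows "integrable lborel F \<and> integral\<^sup>L lborel F = integral\<^sup>L lborel (\<lambda>x. \<bar>Jac (\<psi>' x)\<bar> * F (\<psi> x))"
proof -
  define H where "H x = \<bar>Jac (\<psi>' x)\<bar> * F (\<psi> x)" for x
  have H[measurable]: "H \<in> borel_measurable borel" using G by (simp add: H_def[abs_def])
  define g where "g v = Tv (\<psi> (Ti v))" for v
  define g' where "g' v = (\<lambda>w. Tv (\<psi>' (Ti v) (Ti w)))" for v
  define f where "f y = (vec (F (Ti y)) :: real^1)" for y
  have derg: "(g has_derivative g' v) (at v within UNIV)" for v
  proof -
    have "((\<lambda>v. \<psi> (Ti v)) has_derivative (\<lambda>w. \<psi>' (Ti v) (Ti w))) (at v)"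
      by (rule has_derivative_compose[OF bounded_linear_imp_has_derivative[OF bounded_linear_Ti] der])
    then show ?thesis unfolding g_def g'_def
      using bounded_linear.has_derivative[OF bounded_linear_Tv] by auto
  qed
  have injg: "inj_on g UNIV"
  proof (rule injI)
    fix x y assume "g x = g y"
    then have "Ti (Tv (\<psi> (Ti x))) = Ti (Tv (\<psi> (Ti y)))" unfolding g_def by simp
    then have "\<psi> (Ti x) = \<psi> (Ti y)" by simp
    then have "Ti x = Ti y" using bij_is_inj[OF bij] by (simp add: inj_eq)
    then have "Tv (Ti x) = Tv (Ti y)" by simp
    then show "x = y" by simp
  qed
  have surjg: "g ` UNIV = UNIV"
  proof -
    have "y = g (Tv (inv \<psi> (Ti y)))" for y
      using bij by (simp add: g_def surj_f_inv_f bij_is_surj)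
    then show ?thesis by blast
  qed
  have eqD: "\<bar>det (matrix (g' x))\<bar> *\<^sub>R f (g x) = vec (H (Ti x))" for x
    by (simp add: g_def g'_def f_def H_def Jac_def vec_scaleR)
  have HTi: "integrable lborel (\<lambda>x. H (Ti x))"
  proof -
    have "integrable lborel H" using int by (simp add: H_def[abs_def])
    then show ?thesis using integrable_Ti_iff[OF H] by simp
  qed
  have LHS: "(\<lambda>x. \<bar>det (matrix (g' x))\<bar> *\<^sub>R f (g x)) absolutely_integrable_on UNIV"
    unfolding eqD absolutely_integrable_on_1_iff using HTi lborel_abs_int[of "\<lambda>x. H (Ti x)"] by simp
  define b where "b = integral UNIV (\<lambda>x. \<bar>det (matrix (g' x))\<bar> *\<^sub>R f (g x))"
  have "f absolutely_integrable_on (g ` UNIV) \<and> integral (g ` UNIV) f = b"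
    using has_absolute_integral_change_of_variables[of UNIV g g' f b] derg injg LHS b_def by simp
  then have fi: "f absolutely_integrable_on UNIV" and fb: "integral UNIV f = b" using surjg by auto
  have FTi: "integrable lborel (\<lambda>y. F (Ti y))"
    using fi unfolding absolutely_integrable_on_1_iff f_def using lborel_abs_int[of "\<lambda>y. F (Ti y)"] by simp
  then have intF: "integrable lborel F" using integrable_Ti_iff[OF F] by simp
  have "vec (integral\<^sup>L lborel F) = integral UNIV f"
    using integral_on_1_eq[of UNIV f] integral_lborel[OF FTi] integral_Ti[OF F] by (simp add: f_def)
  also have "\<dots> = b" by (rule fb)
  also have "b = vec (integral\<^sup>L lborel H)"
    unfolding b_def eqD using integral_on_1_eq[of UNIV "\<lambda>x. vec (H (Ti x))"] integral_lborel[OF HTi] integral_Ti[OF H] by simp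
  finally have "integral\<^sup>L lborel F = integral\<^sup>L lborel H" by (simp add: vec_eq_iff)
  then show ?thesis using intF by (simp add: H_def[abs_def])
qed


definition gd :: "'a::euclidean_space \<Rightarrow> real" where
  "gd x = (2 * pi) powr (- real DIM('a) / 2) * exp (- (norm x)\<^sup>2 / 2)"

lemma gd_pos: "0 < gd x" by (simp add: gd_def)

lemma gd_measurable[measurable]: "gd \<in> borel_measurable borel"
  unfolding gd_def[abs_def] by measurable

lemma norm_sq_Basis: "(norm (x::'a::euclidean_space))\<^sup>2 = (\<Sum>b\<in>Basis. (x \<bullet> b)\<^sup>2)"
  by (simp only: power2_norm_eq_inner euclidean_inner[of x x]) (simp add: power2_eq_square)

lemma gd_prod: "gd (x::'a::euclidean_space) = (\<Prod>b\<in>Basis. std_normal_density (x \<bullet> b))"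
proof -
  have "(\<Prod>b\<in>(Basis::'a set). std_normal_density (x \<bullet> b))
      = (\<Prod>b\<in>(Basis::'a set). (1 / sqrt (2 * pi)) * exp (- (x \<bullet> b)\<^sup>2 / 2))"
    by (simp add: std_normal_density_def)
  also have "\<dots> = (1 / sqrt (2 * pi)) ^ DIM('a) * exp (\<Sum>b\<in>Basis. - (x \<bullet> b)\<^sup>2 / 2)"
    unfolding prod.distrib by (simp add: exp_sum)
  also have "(\<Sum>b\<in>(Basis::'a set). - (x \<bullet> b)\<^sup>2 / 2) = - (norm x)\<^sup>2 / 2"
    by (simp add: norm_sq_Basis sum_divide_distrib[symmetric] sum_negf)
  also have "(1 / sqrt (2 * pi)) ^ DIM('a) = (2 * pi) powr (- real DIM('a) / 2)"
  proof -
    have "(2 * pi) powr (- real DIM('a) / 2) = ((2 * pi) powr (1/2)) powr (- real DIM('a))"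
      by (simp add: powr_powr)
    also have "\<dots> = inverse (sqrt (2 * pi) powr real DIM('a))"
      by (simp add: powr_minus powr_half_sqrt)
    also have "\<dots> = (1 / sqrt (2 * pi)) ^ DIM('a)"
      by (simp add: powr_realpow power_one_over inverse_eq_divide)
    finally show ?thesis by simp
  qed
  finally show ?thesis by (simp add: gd_def)
qed

lemma nn_integral_normal: "0 < \<sigma> \<Longrightarrow> (\<integral>\<^sup>+s. ennreal (normal_density \<mu> \<sigma> s) \<partial>lborel) = 1"
proof -
  assume "0 < \<sigma>"
  have "(\<integral>\<^sup>+s. ennreal (normal_density \<mu> \<sigma> s) \<partial>lborel) = ennreal (\<integral>s. normal_density \<mu> \<sigma> s \<partial>lborel)"
    by (rule nn_integral_eq_integral) (auto intro!: integrable_normal_density simp: \<open>0 < \<sigma>\<close>)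
  then show ?thesis using integral_normal_density[OF \<open>0 < \<sigma>\<close>] by simp
qed

lemma nn_integral_std_normal: "(\<integral>\<^sup>+s. ennreal (std_normal_density s) \<partial>lborel) = 1"
  by (rule nn_integral_normal) simp

lemma nn_integral_gd: "(\<integral>\<^sup>+x. ennreal (gd (x::'a::euclidean_space)) \<partial>lborel) = 1"
proof -
  have "(\<integral>\<^sup>+x. ennreal (gd (x::'a)) \<partial>lborel) = (\<integral>\<^sup>+x. (\<Prod>b\<in>Basis. ennreal (std_normal_density ((x::'a) \<bullet> b))) \<partial>lborel)"
    by (intro nn_integral_cong) (simp add: gd_prod prod_ennreal)
  also have "\<dots> = (\<Prod>b\<in>(Basis::'a set). (\<integral>\<^sup>+s. ennreal (std_normal_density s) \<partial>lborel))"
    by (rule nn_integral_lborel_prod) auto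
  also have "\<dots> = 1" by (simp add: nn_integral_std_normal)
  finally show ?thesis .
qed

lemma integrable_gd: "integrable lborel (gd :: 'a::euclidean_space \<Rightarrow> real)"
  by (rule integrableI_nonneg) (auto intro!: AE_I2 simp: nn_integral_gd gd_pos less_imp_le)

lemma integral_gd: "integral\<^sup>L lborel (gd :: 'a::euclidean_space \<Rightarrow> real) = 1"
  using nn_integral_eq_integral[OF integrable_gd] nn_integral_gd gd_pos
  by (metis (no_types, lifting) AE_I2 ennreal_eq_1 less_le)

lemma std_gaussian_eq: "density lborel (\<lambda>x. ennreal ((2 * pi) powr (- real DIM('a) / 2) * exp (- (norm x)\<^sup>2 / 2)))
   = density lborel (\<lambda>x. ennreal (gd (x::'a::euclidean_space)))"
  by (simp add: gd_def[abs_def])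

lemma prob_space_gd: "prob_space (density lborel (\<lambda>x. ennreal (gd (x::'a::euclidean_space))))"
  by (rule prob_spaceI) (simp add: emeasure_density nn_integral_gd)

definition ge :: "'a::euclidean_space \<Rightarrow> real" where
  "ge x = exp (- (norm x)\<^sup>2 / 4)"

lemma ge_measurable[measurable]: "ge \<in> borel_measurable borel"
  unfolding ge_def[abs_def] by measurable

lemma integrable_ge: "integrable lborel (ge :: 'a::euclidean_space \<Rightarrow> real)"
proof -
  have nd: "normal_density 0 (sqrt 2) s = exp (- s\<^sup>2 / 4) / sqrt (4 * pi)" for s
    by (simp add: normal_density_def real_sqrt_mult)
  have one: "(\<integral>\<^sup>+s. ennreal (exp (- s\<^sup>2 / 4)) \<partial>lborel) = ennreal (sqrt (4 * pi))"
  proof -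
    have "(\<integral>\<^sup>+s. ennreal (exp (- s\<^sup>2 / 4)) \<partial>lborel)
        = (\<integral>\<^sup>+s. ennreal (sqrt (4 * pi)) * ennreal (normal_density 0 (sqrt 2) s) \<partial>lborel)"
      by (intro nn_integral_cong) (simp add: nd ennreal_mult[symmetric])
    also have "\<dots> = ennreal (sqrt (4 * pi)) * (\<integral>\<^sup>+s. ennreal (normal_density 0 (sqrt 2) s) \<partial>lborel)"
      by (rule nn_integral_cmult) simp
    also have "(\<integral>\<^sup>+s. ennreal (normal_density 0 (sqrt 2) s) \<partial>lborel) = 1"
      by (rule nn_integral_normal) simp
    finally show ?thesis by simp
  qed
  have "ge x = (\<Prod>b\<in>Basis. exp (- (x \<bullet> b)\<^sup>2 / 4))" for x :: 'a
    by (simp add: ge_def exp_sum[symmetric] norm_sq_Basis sum_divide_distrib[symmetric] sum_negf)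
  then have "(\<integral>\<^sup>+x. ennreal (ge (x::'a)) \<partial>lborel) = (\<integral>\<^sup>+x. (\<Prod>b\<in>Basis. ennreal (exp (- ((x::'a) \<bullet> b)\<^sup>2 / 4))) \<partial>lborel)"
    by (intro nn_integral_cong) (simp add: prod_ennreal)
  also have "\<dots> = (\<Prod>b\<in>(Basis::'a set). (\<integral>\<^sup>+s. ennreal (exp (- s\<^sup>2 / 4)) \<partial>lborel))"
    by (rule nn_integral_lborel_prod) auto
  also have "\<dots> = (\<Prod>b\<in>(Basis::'a set). ennreal (sqrt (4 * pi)))" using one by simp
  finally have "(\<integral>\<^sup>+x. ennreal (ge (x::'a)) \<partial>lborel) < \<infinity>"
    by (simp add: ennreal_power)
  then show ?thesis
    by (intro integrableI_nonneg) (auto simp: ge_def)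
qed

lemma exp_aux: fixes s :: real assumes "0 \<le> s" shows "(s + 1) * exp (s + 1) \<le> exp (s\<^sup>2 / 4 + 6)"
proof -
  have "s + 1 \<le> exp s" by (metis add.commute exp_ge_add_one_self)
  then have "(s + 1) * exp (s + 1) \<le> exp s * exp (s + 1)" by (intro mult_right_mono) auto
  also have "\<dots> = exp (2 * s + 1)" by (simp add: exp_add[symmetric])
  also have "\<dots> \<le> exp (s\<^sup>2 / 4 + 6)"
  proof -
    have "0 \<le> (s / 2 - 2)\<^sup>2" by simp
    then have "2 * s + 1 \<le> s\<^sup>2 / 4 + 6" by (simp add: power2_eq_square field_simps)
    then show ?thesis by simp
  qed
  finally show ?thesis .
qed

lemma gd_ge: "gd x = (2 * pi) powr (- real DIM('a) / 2) * ge x * exp (- (norm (x::'a::euclidean_space))\<^sup>2 / 4)"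
  by (simp add: gd_def ge_def exp_add[symmetric])

lemma gd_dom:
  fixes x :: "'a::euclidean_space" and s :: real
  assumes "0 \<le> s" "s \<le> norm x"
  shows "gd x * ((s + 1) * exp (s + 1)) \<le> (2 * pi) powr (- real DIM('a) / 2) * exp 6 * ge x"
proof -
  have "(s + 1) * exp (s + 1) \<le> exp (s\<^sup>2 / 4 + 6)" by (rule exp_aux[OF assms(1)])
  also have "\<dots> \<le> exp ((norm x)\<^sup>2 / 4 + 6)" using assms by (simp add: power_mono)
  finally have "gd x * ((s + 1) * exp (s + 1)) \<le> gd x * exp ((norm x)\<^sup>2 / 4 + 6)"
    by (intro mult_left_mono) (auto simp: gd_pos less_imp_le)
  also have "\<dots> = (2 * pi) powr (- real DIM('a) / 2) * exp 6 * ge x"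
    by (simp add: gd_def ge_def exp_add[symmetric] algebra_simps)
  finally show ?thesis .
qed

lemma integrable_gd_norm: "integrable lborel (\<lambda>x::'a::euclidean_space. gd x * norm x)"
proof (rule Bochner_Integration.integrable_bound)
  show "integrable lborel (\<lambda>x::'a. (2 * pi) powr (- real DIM('a) / 2) * exp 6 * ge x)"
    using integrable_ge by simp
  show "AE x in lborel. norm (gd x * norm x) \<le> norm ((2 * pi) powr (- real DIM('a) / 2) * exp 6 * ge (x::'a))"
  proof (intro AE_I2)
    fix x :: 'a
    have "gd x * norm x \<le> gd x * ((norm x + 1) * exp (norm x + 1))"
    proof (intro mult_left_mono)
      have "norm x \<le> norm x + 1" by simp
      also have "\<dots> \<le> (norm x + 1) * exp (norm x + 1)"
        using exp_ge_add_one_self[of "norm x + 1"] by (intro mult_le_cancel_left1[THEN iffD2]) auto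
      finally show "norm x \<le> (norm x + 1) * exp (norm x + 1)" .
    qed (simp add: gd_pos less_imp_le)
    also have "\<dots> \<le> (2 * pi) powr (- real DIM('a) / 2) * exp 6 * ge x" by (rule gd_dom) auto
    finally show "norm (gd x * norm x) \<le> norm ((2 * pi) powr (- real DIM('a) / 2) * exp 6 * ge x)"
      using gd_pos[of x] by (simp add: ge_def)
  qed
qed measurable


lemma lborel_shift_integral:
  fixes G :: "'a::euclidean_space \<Rightarrow> real"
  assumes [measurable]: "G \<in> borel_measurable borel"
  shows "integral\<^sup>L lborel G = integral\<^sup>L lborel (\<lambda>x. G (c + x))"
    and "integrable lborel G \<longleftrightarrow> integrable lborel (\<lambda>x. G (c + x))"
proof -
  have "integral\<^sup>L lborel G = integral\<^sup>L (distr lborel borel ((+) c)) G" by (simp add: lborel_distr_plus)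
  also have "\<dots> = integral\<^sup>L lborel (\<lambda>x. G (c + x))" by (rule integral_distr) simp_all
  finally show "integral\<^sup>L lborel G = integral\<^sup>L lborel (\<lambda>x. G (c + x))" .
  have "integrable lborel G \<longleftrightarrow> integrable (distr lborel borel ((+) c)) G" by (simp add: lborel_distr_plus)
  also have "\<dots> \<longleftrightarrow> integrable lborel (\<lambda>x. G (c + x))" by (rule integrable_distr_eq) simp_all
  finally show "integrable lborel G \<longleftrightarrow> integrable lborel (\<lambda>x. G (c + x))" .
qed

lemma exp_minus_one_bound: fixes u :: real shows "\<bar>exp u - 1\<bar> \<le> \<bar>u\<bar> * exp \<bar>u\<bar>"
proof (cases "0 \<le> u")
  case True
  have "1 - u \<le> exp (- u)" using exp_ge_add_one_self[of "-u"] by simp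
  then have "exp u * (1 - u) \<le> exp u * exp (- u)" by (intro mult_left_mono) auto
  then have "exp u - 1 \<le> u * exp u" by (simp add: exp_minus field_simps)
  then show ?thesis using True by simp
next
  case False
  have "1 + u \<le> exp u" using exp_ge_add_one_self[of u] by simp
  moreover have "exp u \<le> 1" using False by simp
  moreover have "1 \<le> exp \<bar>u\<bar>" by simp
  ultimately have "\<bar>exp u - 1\<bar> \<le> \<bar>u\<bar>" using False by linarith
  also have "\<dots> \<le> \<bar>u\<bar> * exp \<bar>u\<bar>" by (rule mult_le_cancel_left1[THEN iffD2]) simp
  finally show ?thesis .
qed

lemma quot_bound:
  fixes t s :: real assumes t: "0 < t" "t \<le> 1"
  shows "\<bar>(exp (t * s - t\<^sup>2 / 2) - 1) / t\<bar> \<le> (\<bar>s\<bar> + 1) * exp (\<bar>s\<bar> + 1)"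
proof -
  let ?u = "t * s - t\<^sup>2 / 2"
  have u1: "\<bar>?u\<bar> \<le> t * (\<bar>s\<bar> + 1)"
  proof -
    have "\<bar>?u\<bar> \<le> \<bar>t * s\<bar> + \<bar>t\<^sup>2 / 2\<bar>" by (rule abs_triangle_ineq4)
    also have "\<bar>t\<^sup>2 / 2\<bar> = t\<^sup>2 / 2" by simp
    finally have "\<bar>?u\<bar> \<le> \<bar>t * s\<bar> + t\<^sup>2 / 2" .
    also have "\<dots> \<le> t * \<bar>s\<bar> + t" using t by (simp add: abs_mult power2_eq_square mult_left_le)
    finally show ?thesis by (simp add: algebra_simps)
  qed
  have u2: "\<bar>?u\<bar> \<le> \<bar>s\<bar> + 1" using u1 t by (smt (verit) mult_left_le_one_le abs_ge_zero)
  have "\<bar>exp ?u - 1\<bar> \<le> \<bar>?u\<bar> * exp \<bar>?u\<bar>" by (rule exp_minus_one_bound)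
  also have "\<dots> \<le> (t * (\<bar>s\<bar> + 1)) * exp (\<bar>s\<bar> + 1)" using u1 u2 by (intro mult_mono) auto
  finally show ?thesis using t by (simp add: abs_div pos_divide_le_eq algebra_simps)
qed

lemma deriv_seq:
  fixes f :: "real \<Rightarrow> real"
  assumes "(f has_real_derivative D) (at 0)"
  shows "(\<lambda>n. (f (inverse (real (Suc n))) - f 0) / inverse (real (Suc n))) \<longlonglongrightarrow> D"
proof -
  have lim: "((\<lambda>h. (f (0 + h) - f 0) / h) \<longlongrightarrow> D) (at 0)"
    using assms by (simp add: DERIV_def)
  have t: "filterlim (\<lambda>n. inverse (real (Suc n))) (at 0) sequentially"
    by (rule filterlim_atI) (use LIMSEQ_inverse_real_of_nat in auto)
  show ?thesis using filterlim_compose[OF lim t] by simp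
qed

lemma gd_shift:
  fixes y b :: "'a::euclidean_space" assumes b: "b \<in> Basis"
  shows "gd (y - t *\<^sub>R b) = gd y * exp (t * (y \<bullet> b) - t\<^sup>2 / 2)"
proof -
  have "(norm (y - t *\<^sub>R b))\<^sup>2 = (norm y)\<^sup>2 - 2 * t * (y \<bullet> b) + t\<^sup>2"
    using b by (simp only: power2_norm_eq_inner) (simp add: inner_diff_left inner_diff_right inner_commute power2_eq_square algebra_simps inner_Basis)
  then show ?thesis by (simp add: gd_def exp_add[symmetric] algebra_simps diff_divide_distrib add_divide_distrib)
qed

lemma stein1:
  fixes h :: "'a::euclidean_space \<Rightarrow> real" and b :: 'a
  assumes b: "b \<in> Basis"
    and hm[measurable]: "h \<in> borel_measurable borel"
    and hb: "\<And>x. \<bar>h x\<bar> \<le> B"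
    and hlip: "\<And>x t. \<bar>h (x + t *\<^sub>R b) - h x\<bar> \<le> K * \<bar>t\<bar>"
    and hder: "\<And>x. ((\<lambda>t. h (x + t *\<^sub>R b)) has_real_derivative D x) (at 0)"
  shows "integrable lborel (\<lambda>x. gd x * D x)"
    and "integrable lborel (\<lambda>x. gd x * (x \<bullet> b) * h x)"
    and "integral\<^sup>L lborel (\<lambda>x. gd x * (x \<bullet> b) * h x) = integral\<^sup>L lborel (\<lambda>x. gd x * D x)"
proof -
  define t where "t n = inverse (real (Suc n))" for n :: nat
  have t0: "0 < t n" "t n \<le> 1" for n by (auto simp: t_def field_simps)
  define L where "L n x = gd x * ((h (x + t n *\<^sub>R b) - h x) / t n)" for n x
  define R where "R n x = gd x * h x * ((exp (t n * (x \<bullet> b) - (t n)\<^sup>2 / 2) - 1) / t n)" for n x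
  have Lm[measurable]: "L n \<in> borel_measurable borel" for n unfolding L_def by measurable
  have Rm[measurable]: "R n \<in> borel_measurable borel" for n unfolding R_def by measurable
  have Llim: "(\<lambda>n. L n x) \<longlonglongrightarrow> gd x * D x" for x
    unfolding L_def t_def using deriv_seq[OF hder[of x]] by (intro tendsto_mult tendsto_const) simp
  have Dm[measurable]: "(\<lambda>x. gd x * D x) \<in> borel_measurable borel"
    by (rule borel_measurable_LIMSEQ_metric[OF Lm Llim])
  have K0: "0 \<le> K" using hlip[of 0 1] by (metis abs_ge_zero abs_one mult.right_neutral order_trans)
  have Lbnd: "\<bar>L n x\<bar> \<le> K * gd x" for n x
  proof -
    have "\<bar>(h (x + t n *\<^sub>R b) - h x) / t n\<bar> \<le> K"
      using hlip[of x "t n"] t0[of n] by (simp add: abs_div divide_le_eq)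
    then have "gd x * \<bar>(h (x + t n *\<^sub>R b) - h x) / t n\<bar> \<le> gd x * K"
      using gd_pos[of x] by (intro mult_left_mono) auto
    then show ?thesis using gd_pos[of x] by (simp add: L_def abs_mult mult.commute)
  qed
  have intK: "integrable lborel (\<lambda>x::'a. K * gd x)" by (intro integrable_mult_right integrable_gd)
  show intD: "integrable lborel (\<lambda>x. gd x * D x)"
    by (rule integrable_dominated_convergence[where s=L and w="\<lambda>x. K * gd x"]) (auto intro!: AE_I2 simp: Llim Lbnd intK integrable_gd)
  have Lint: "(\<lambda>n. integral\<^sup>L lborel (L n)) \<longlonglongrightarrow> integral\<^sup>L lborel (\<lambda>x. gd x * D x)"
    by (rule integral_dominated_convergence[where w="\<lambda>x. K * gd x"]) (auto intro!: AE_I2 simp: Llim Lbnd intK integrable_gd)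
  define C where "C = (2 * pi) powr (- real DIM('a) / 2) * exp 6"
  have bx: "\<bar>x \<bullet> b\<bar> \<le> norm x" for x using b Basis_le_norm by blast
  have B0: "0 \<le> B" using hb[of 0] by simp
  have Rbnd: "\<bar>R n x\<bar> \<le> B * C * ge x" for n x
  proof -
    have "norm (R n x) = gd x * \<bar>h x\<bar> * \<bar>(exp (t n * (x \<bullet> b) - (t n)\<^sup>2 / 2) - 1) / t n\<bar>"
      using gd_pos[of x] by (simp add: R_def abs_mult)
    also have "\<dots> \<le> gd x * B * ((\<bar>x \<bullet> b\<bar> + 1) * exp (\<bar>x \<bullet> b\<bar> + 1))"
      using gd_pos[of x] hb[of x] quot_bound[OF t0(1,2)] by (intro mult_mono) (auto simp: less_imp_le)
    also have "\<dots> = B * (gd x * ((\<bar>x \<bullet> b\<bar> + 1) * exp (\<bar>x \<bullet> b\<bar> + 1)))" by simp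
    also have "\<dots> \<le> B * (C * ge x)" unfolding C_def using bx[of x] B0 by (intro mult_left_mono gd_dom) auto
    finally show ?thesis by simp
  qed
  have intC: "integrable lborel (\<lambda>x::'a. B * C * ge x)" by (intro integrable_mult_right integrable_ge)
  have Rlim: "(\<lambda>n. R n x) \<longlonglongrightarrow> gd x * (x \<bullet> b) * h x" for x
  proof -
    have "((\<lambda>s. exp (s * (x \<bullet> b) - s\<^sup>2 / 2)) has_real_derivative (x \<bullet> b)) (at 0)"
      by (auto intro!: derivative_eq_intros)
    from deriv_seq[OF this] have "(\<lambda>n. (exp (t n * (x \<bullet> b) - (t n)\<^sup>2 / 2) - 1) / t n) \<longlonglongrightarrow> x \<bullet> b"
      by (simp add: t_def)
    then have "(\<lambda>n. gd x * h x * ((exp (t n * (x \<bullet> b) - (t n)\<^sup>2 / 2) - 1) / t n)) \<longlonglongrightarrow> gd x * h x * (x \<bullet> b)"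
      by (rule tendsto_mult_left)
    then show ?thesis by (simp add: R_def mult_ac)
  qed
  have Rm2[measurable]: "(\<lambda>x. gd x * (x \<bullet> b) * h x) \<in> borel_measurable borel" by measurable
  show intR: "integrable lborel (\<lambda>x. gd x * (x \<bullet> b) * h x)"
    by (rule integrable_dominated_convergence[where s=R and w="\<lambda>x. B * C * ge x"]) (auto intro!: AE_I2 simp: Rlim Rbnd intC integrable_ge)
  have Rint: "(\<lambda>n. integral\<^sup>L lborel (R n)) \<longlonglongrightarrow> integral\<^sup>L lborel (\<lambda>x. gd x * (x \<bullet> b) * h x)"
    by (rule integral_dominated_convergence[where w="\<lambda>x. B * C * ge x"]) (auto intro!: AE_I2 simp: Rlim Rbnd intC integrable_ge)
  have LR: "integral\<^sup>L lborel (L n) = integral\<^sup>L lborel (R n)" for n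
  proof -
    let ?t = "t n"
    have dom: "\<bar>gd x\<bar> * \<bar>h y\<bar> \<le> \<bar>B\<bar> * \<bar>gd x\<bar>" for x y
    proof -
      have "\<bar>h y\<bar> \<le> \<bar>B\<bar>" using hb[of y] by linarith
      then show ?thesis by (metis abs_ge_zero mult.commute mult_left_mono)
    qed
    have int1: "integrable lborel (\<lambda>x. gd x * h x)"
      by (rule Bochner_Integration.integrable_bound[OF integrable_mult_right[OF integrable_gd, of B]])
         (auto intro!: AE_I2 simp: dom abs_mult)
    have int2: "integrable lborel (\<lambda>x. gd x * h (x + ?t *\<^sub>R b))"
      by (rule Bochner_Integration.integrable_bound[OF integrable_mult_right[OF integrable_gd, of B]])
         (auto intro!: AE_I2 simp: dom abs_mult)
    have int3: "integrable lborel (\<lambda>x. gd x * h x * exp (?t * (x \<bullet> b) - ?t\<^sup>2 / 2))"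
    proof -
      have "integrable lborel (\<lambda>x. gd (?t *\<^sub>R b + x - ?t *\<^sub>R b) * h (?t *\<^sub>R b + x + ?t *\<^sub>R b - ?t *\<^sub>R b))"
        using int2 by (simp add: add.commute)
      then have "integrable lborel (\<lambda>y. gd (y - ?t *\<^sub>R b) * h (y))"
        using lborel_shift_integral(2)[of "\<lambda>y. gd (y - ?t *\<^sub>R b) * h y" "?t *\<^sub>R b"] by (simp add: add.commute)
      then show ?thesis by (simp add: gd_shift[OF b] mult_ac)
    qed
    have sh: "integral\<^sup>L lborel (\<lambda>x. gd x * h (x + ?t *\<^sub>R b)) = integral\<^sup>L lborel (\<lambda>x. gd x * h x * exp (?t * (x \<bullet> b) - ?t\<^sup>2 / 2))"
    proof -
      have "integral\<^sup>L lborel (\<lambda>y. gd (y - ?t *\<^sub>R b) * h y) = integral\<^sup>L lborel (\<lambda>x. gd (?t *\<^sub>R b + x - ?t *\<^sub>R b) * h (?t *\<^sub>R b + x))"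
        by (rule lborel_shift_integral(1)) measurable
      then show ?thesis by (simp add: gd_shift[OF b] add.commute mult_ac)
    qed
    have "integral\<^sup>L lborel (L n) = (integral\<^sup>L lborel (\<lambda>x. gd x * h (x + ?t *\<^sub>R b)) - integral\<^sup>L lborel (\<lambda>x. gd x * h x)) / ?t"
      unfolding L_def using int1 int2
      by (simp add: right_diff_distrib diff_divide_distrib[symmetric])
    also have "\<dots> = (integral\<^sup>L lborel (\<lambda>x. gd x * h x * exp (?t * (x \<bullet> b) - ?t\<^sup>2 / 2)) - integral\<^sup>L lborel (\<lambda>x. gd x * h x)) / ?t"
      by (simp only: sh)
    also have "\<dots> = integral\<^sup>L lborel (R n)"
      unfolding R_def using int1 int3
      by (simp add: right_diff_distrib diff_divide_distrib[symmetric])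
    finally show ?thesis .
  qed
  show "integral\<^sup>L lborel (\<lambda>x. gd x * (x \<bullet> b) * h x) = integral\<^sup>L lborel (\<lambda>x. gd x * D x)"
    using LIMSEQ_unique[OF Rint] Lint LR by simp
qed


lemma dir_deriv:
  fixes f :: "'a::euclidean_space \<Rightarrow> 'b::euclidean_space"
  assumes "(f has_derivative f') (at x)"
  shows "((\<lambda>s. f (x + s *\<^sub>R w) \<bullet> e) has_real_derivative (f' w \<bullet> e)) (at 0)"
proof -
  have bl: "bounded_linear f'" using assms by (rule has_derivative_bounded_linear)
  have l1: "((\<lambda>s::real. x + s *\<^sub>R w) has_derivative (\<lambda>s. s *\<^sub>R w)) (at 0)"
    by (auto intro!: derivative_eq_intros)
  have "((\<lambda>s. f (x + s *\<^sub>R w)) has_derivative (\<lambda>s. f' (s *\<^sub>R w))) (at 0)"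
    using has_derivative_compose[OF l1, of f f'] assms by simp
  then have "((\<lambda>s. f (x + s *\<^sub>R w) \<bullet> e) has_derivative (\<lambda>s. f' (s *\<^sub>R w) \<bullet> e)) (at 0)"
    by (auto intro!: derivative_eq_intros)
  moreover have "(\<lambda>s. f' (s *\<^sub>R w) \<bullet> e) = (\<lambda>s. (f' w \<bullet> e) * s)"
    using linear_cmul[OF bounded_linear.linear[OF bl]] by (simp add: fun_eq_iff mult.commute)
  ultimately show ?thesis by (simp add: has_field_derivative_def)
qed

lemma card_bidx: "CARD('a::euclidean_space bidx) = DIM('a)"
  using type_definition.card[OF type_definition_bidx] by simp

lemma Ti_axis: "Ti (axis j 1) = Rep_bidx j"
proof -
  have "Ti (axis j 1) = (\<Sum>i\<in>UNIV. (if i = j then Rep_bidx i else 0))"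
    unfolding Ti_def by (intro sum.cong) (auto simp: axis_def)
  then show ?thesis by simp
qed

lemma matrix_entry: "matrix (\<lambda>v. Tv (L (Ti v))) $ i $ j = L (Rep_bidx j) \<bullet> Rep_bidx i"
  by (simp add: matrix_def Ti_axis Tv_component)

lemma Jac_decomp:
  fixes L :: "'a::euclidean_space \<Rightarrow> 'a"
  shows "matrix (\<lambda>v. Tv (L (Ti v))) = mat 1 + matrix (\<lambda>v. Tv (L (Ti v) - Ti v))"
  by (simp add: vec_eq_iff matrix_entry matrix_entry[of "\<lambda>w. L w - w", simplified] mat_def inner_diff_left inner_Rep_bidx)

lemma trace_decomp:
  fixes L :: "'a::euclidean_space \<Rightarrow> 'a"
  shows "trace (matrix (\<lambda>v. Tv (L (Ti v) - Ti v))) = (\<Sum>b\<in>Basis. (L b - b) \<bullet> b)"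
proof -
  have "trace (matrix (\<lambda>v. Tv (L (Ti v) - Ti v))) = (\<Sum>i\<in>UNIV. (L (Rep_bidx i) - Rep_bidx i) \<bullet> Rep_bidx i)"
    unfolding trace_def using matrix_entry[of "\<lambda>w. L w - w"] by simp
  also have "\<dots> = (\<Sum>b\<in>Basis. (L b - b) \<bullet> b)"
    by (rule sym, rule sum.reindex_cong[OF inj_Rep_bidx Rep_bidx_image[symmetric]]) simp
  finally show ?thesis .
qed

lemma matrix_bound:
  fixes L :: "'a::euclidean_space \<Rightarrow> 'a"
  assumes bl: "bounded_linear L" and on: "onorm (\<lambda>h. L h - h) \<le> r"
  shows "norm (matrix (\<lambda>v. Tv (L (Ti v) - Ti v)) *v v) \<le> r * norm v"
proof -
  have blL: "bounded_linear (\<lambda>h. L h - h)" using bl by (intro bounded_linear_sub bounded_linear_ident)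
  have "bounded_linear (\<lambda>v. Tv (L (Ti v) - Ti v))"
    using bounded_linear_compose[OF bounded_linear_Tv bounded_linear_compose[OF blL bounded_linear_Ti]] by simp
  then have lin: "linear (\<lambda>v. Tv (L (Ti v) - Ti v))" by (rule bounded_linear.linear)
  have "norm (matrix (\<lambda>v. Tv (L (Ti v) - Ti v)) *v v) = norm (L (Ti v) - Ti v)"
    using matrix_works[OF lin[unfolded linear_matrix_vector_mul_eq[symmetric]]] by (simp add: norm_Tv)
  also have "\<dots> \<le> onorm (\<lambda>h. L h - h) * norm (Ti v)" by (rule onorm[OF blL])
  also have "\<dots> \<le> r * norm v"
    using on by (simp add: norm_Ti mult_right_mono)
  finally show ?thesis .
qed

lemma Jac_bounds:
  fixes L :: "'a::euclidean_space \<Rightarrow> 'a"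
  assumes bl: "bounded_linear L" and on: "onorm (\<lambda>h. L h - h) \<le> r" and r0: "0 \<le> r" and r1: "r < 1"
  shows "Jac L \<noteq> 0
    \<and> (\<Sum>b\<in>Basis. (L b - b) \<bullet> b) - ln \<bar>Jac L\<bar> \<le> real DIM('a) * (r\<^sup>2 / (2 * (1 - r)))
    \<and> ln \<bar>Jac L\<bar> \<le> real DIM('a) * r
    \<and> real DIM('a) * ln (1 - r) \<le> ln \<bar>Jac L\<bar>"
  using det_key[OF matrix_bound[OF bl on] r0 r1]
  unfolding Jac_def Jac_decomp[of L] trace_decomp card_bidx by simp


theorem lemma10:
  fixes \<psi> :: "'a::euclidean_space \<Rightarrow> 'a" and \<psi>' :: "'a \<Rightarrow> 'a \<Rightarrow> 'a"
    and m1 m2 :: real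
  assumes "bij \<psi>"
    and "\<And>v. (\<psi> has_derivative \<psi>' v) (at v)"
    and "0 \<le> m1" and "0 \<le> m2" and "m2 < 1"
    and "\<And>v. norm (\<psi> v - v) \<le> m1"
    and "\<And>v. onorm (\<lambda>h. \<psi>' v h - h) \<le> m2"
  shows "absolutely_continuous std_gaussian (pushforward \<psi> std_gaussian)
    \<and> integrable (pushforward \<psi> std_gaussian)
        (entropy_density (exp 1) std_gaussian (pushforward \<psi> std_gaussian))
    \<and> KL_divergence (exp 1) std_gaussian (pushforward \<psi> std_gaussian)
        \<le> m1\<^sup>2 / 2 + real DIM('a) * m2\<^sup>2 / (2 * (1 - m2))"
proof -
  note bij = assms(1) and der = assms(2) and m10 = assms(3) and m20 = assms(4) and m21 = assms(5)
    and gb0 = assms(6) and onb = assms(7)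
  define g where "g x = \<psi> x - x" for x
  define g' where "g' x = (\<lambda>h. \<psi>' x h - h)" for x
  have bl: "bounded_linear (\<psi>' x)" for x using der by (rule has_derivative_bounded_linear)
  have gder: "(g has_derivative g' x) (at x)" for x
    unfolding g_def g'_def using der[of x] by (auto intro!: derivative_eq_intros)
  have gon: "onorm (g' x) \<le> m2" for x using onb by (simp add: g'_def)
  have glip: "norm (g x - g y) \<le> m2 * norm (x - y)" for x y
    by (rule differentiable_bound[of UNIV g g' m2]) (simp_all add: gder gon)
  have gbnd: "norm (g x) \<le> m1" for x using gb0 by (simp add: g_def)
  have psi_lower: "(1 - m2) * norm (x - y) \<le> norm (\<psi> x - \<psi> y)" for x y
  proof -
    have "\<psi> x - \<psi> y = (x - y) + (g x - g y)" by (simp add: g_def)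
    then have "norm (x - y) - norm (g x - g y) \<le> norm (\<psi> x - \<psi> y)"
      by (metis norm_diff_ineq diff_minus_eq_add minus_diff_eq)
    then show ?thesis using glip[of x y] by (simp add: algebra_simps)
  qed
  define \<theta> where "\<theta> = inv \<psi>"
  have \<theta>\<psi>[simp]: "\<theta> (\<psi> x) = x" for x using bij by (simp add: \<theta>_def bij_is_inj)
  have \<psi>\<theta>[simp]: "\<psi> (\<theta> y) = y" for y using bij by (simp add: \<theta>_def bij_is_surj surj_f_inv_f)
  have \<theta>cont: "continuous_on UNIV \<theta>"
  proof -
    have "(1 / (1 - m2))-lipschitz_on UNIV \<theta>"
    proof (rule lipschitz_onI)
      fix y z :: 'a
      have "(1 - m2) * norm (\<theta> y - \<theta> z) \<le> norm (y - z)" using psi_lower[of "\<theta> y" "\<theta> z"] by simp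
      then show "dist (\<theta> y) (\<theta> z) \<le> 1 / (1 - m2) * dist y z"
        using m21 by (simp add: dist_norm field_simps)
    qed (use m21 in simp)
    then show ?thesis by (rule lipschitz_on_continuous_on)
  qed
  have \<theta>m[measurable]: "\<theta> \<in> borel_measurable borel" by (rule borel_measurable_continuous_onI[OF \<theta>cont])
  have \<psi>m[measurable]: "\<psi> \<in> borel_measurable borel"
  proof -
    have "continuous_on UNIV \<psi>" by (rule has_derivative_continuous_on[of UNIV \<psi> \<psi>']) (simp add: der)
    then show ?thesis by (rule borel_measurable_continuous_onI)
  qed
  have gm[measurable]: "g \<in> borel_measurable borel" unfolding g_def[abs_def] by measurable
  have Em[measurable]: "(\<lambda>x. \<psi>' x b \<bullet> c) \<in> borel_measurable borel" for b c
  proof (rule borel_measurable_LIMSEQ_metric)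
    fix x
    show "(\<lambda>n. (\<psi> (x + inverse (real (Suc n)) *\<^sub>R b) \<bullet> c - \<psi> (x + 0 *\<^sub>R b) \<bullet> c) / inverse (real (Suc n))) \<longlonglongrightarrow> \<psi>' x b \<bullet> c"
      by (rule deriv_seq[OF dir_deriv[OF der]])
  qed measurable
  have Jm[measurable]: "(\<lambda>x. Jac (\<psi>' x)) \<in> borel_measurable borel"
    unfolding Jac_def det_def matrix_entry by measurable
  have JB: "Jac (\<psi>' x) \<noteq> 0
    \<and> (\<Sum>b\<in>Basis. (\<psi>' x b - b) \<bullet> b) - ln \<bar>Jac (\<psi>' x)\<bar> \<le> real DIM('a) * (m2\<^sup>2 / (2 * (1 - m2)))
    \<and> ln \<bar>Jac (\<psi>' x)\<bar> \<le> real DIM('a) * m2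
    \<and> real DIM('a) * ln (1 - m2) \<le> ln \<bar>Jac (\<psi>' x)\<bar>" for x
    by (rule Jac_bounds[OF bl onb m20 m21])
  define J where "J x = \<bar>Jac (\<psi>' x)\<bar>" for x
  have Jpos: "0 < J x" for x using JB[of x] by (simp add: J_def)
  have Jmeas[measurable]: "J \<in> borel_measurable borel" unfolding J_def[abs_def] by measurable
  define tr where "tr x = (\<Sum>b\<in>Basis. g' x b \<bullet> b)" for x
  have trm[measurable]: "tr \<in> borel_measurable borel"
    unfolding tr_def[abs_def] g'_def by (simp add: inner_diff_left) measurable
  have trJ: "tr x - ln (J x) \<le> real DIM('a) * (m2\<^sup>2 / (2 * (1 - m2)))" for x
    using JB[of x] by (simp add: tr_def g'_def J_def)
  define C0 where "C0 = real DIM('a) * m2 - real DIM('a) * ln (1 - m2)"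
  have lnJb: "\<bar>ln (J x)\<bar> \<le> C0" for x
  proof -
    have "ln (1 - m2) \<le> 0" using m20 m21 by simp
    then have "real DIM('a) * ln (1 - m2) \<le> 0" by (simp add: mult_nonneg_nonpos)
    moreover have "0 \<le> real DIM('a) * m2" using m20 by simp
    ultimately show ?thesis using JB[of x] unfolding C0_def J_def by linarith
  qed
  define M where "M = (std_gaussian :: 'a measure)"
  have Mdef: "M = density lborel (\<lambda>x. ennreal (gd x))"
    by (simp add: M_def std_gaussian_def gd_def[abs_def])
  interpret P: prob_space M unfolding Mdef by (rule prob_space_gd)
  have sets_M[simp]: "sets M = sets borel" by (simp add: Mdef)
  have space_M[simp]: "space M = UNIV" by (simp add: Mdef)
  have measM[simp]: "measurable M = measurable borel" by (rule ext, rule measurable_cong_sets) (simp_all add: Mdef)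
  define N where "N = pushforward \<psi> M"
  have Ndef: "N = distr M borel \<psi>" by (simp add: N_def pushforward_def)
  define \<rho> where "\<rho> y = gd (\<theta> y) / (J (\<theta> y) * gd y)" for y
  have \<rho>m[measurable]: "\<rho> \<in> borel_measurable borel" unfolding \<rho>_def[abs_def] by measurable
  have \<rho>pos: "0 < \<rho> y" for y using Jpos[of "\<theta> y"] gd_pos[of "\<theta> y"] gd_pos[of y] by (simp add: \<rho>_def)
  have N_eq: "N = density M (\<lambda>y. ennreal (\<rho> y))"
  proof (rule measure_eqI)
    show "sets N = sets (density M (\<lambda>y. ennreal (\<rho> y)))" by (simp add: Ndef)
    fix A assume "A \<in> sets N"
    then have A[measurable]: "A \<in> sets borel" by (simp add: Ndef)
    define F where "F y = gd (\<theta> y) / J (\<theta> y) * indicator A y" for y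
    have Fm[measurable]: "F \<in> borel_measurable borel" unfolding F_def[abs_def] by measurable
    define G where "G x = gd x * indicator A (\<psi> x)" for x
    have Gm[measurable]: "G \<in> borel_measurable borel" unfolding G_def[abs_def] by measurable
    have FG: "\<bar>Jac (\<psi>' x)\<bar> * F (\<psi> x) = G x" for x
      using Jpos[of x] by (simp add: F_def G_def J_def[symmetric])
    have Gint: "integrable lborel G"
      by (rule Bochner_Integration.integrable_bound[OF integrable_gd])
         (auto intro!: AE_I2 simp: G_def indicator_def abs_mult gd_pos less_imp_le)
    have cv: "integrable lborel F \<and> integral\<^sup>L lborel F = integral\<^sup>L lborel (\<lambda>x. \<bar>Jac (\<psi>' x)\<bar> * F (\<psi> x))"
      by (rule cov[OF bij der Fm]) (simp_all add: FG Gint)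
    have F0: "0 \<le> F y" for y using gd_pos[of "\<theta> y"] Jpos[of "\<theta> y"] by (simp add: F_def)
    have G0: "0 \<le> G x" for x using gd_pos[of x] by (simp add: G_def)
    have "emeasure N A = emeasure M (\<psi> -` A)" by (simp add: Ndef emeasure_distr)
    also have "\<dots> = (\<integral>\<^sup>+x. ennreal (gd x) * indicator (\<psi> -` A) x \<partial>lborel)"
    proof -
      have "\<psi> -` A \<in> sets borel" using measurable_sets[OF \<psi>m A] by simp
      then show ?thesis by (simp add: Mdef emeasure_density)
    qed
    also have "\<dots> = (\<integral>\<^sup>+x. ennreal (G x) \<partial>lborel)"
      by (intro nn_integral_cong) (simp add: G_def indicator_def)
    also have "\<dots> = ennreal (integral\<^sup>L lborel G)"
      by (rule nn_integral_eq_integral[OF Gint]) (simp add: G0)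
    also have "integral\<^sup>L lborel G = integral\<^sup>L lborel F" using cv by (simp add: FG)
    also have "ennreal (integral\<^sup>L lborel F) = (\<integral>\<^sup>+y. ennreal (F y) \<partial>lborel)"
      by (rule nn_integral_eq_integral[symmetric]) (simp_all add: cv F0)
    also have "\<dots> = (\<integral>\<^sup>+y. ennreal (gd y) * (ennreal (\<rho> y) * indicator A y) \<partial>lborel)"
    proof (intro nn_integral_cong)
      fix y :: 'a
      have "gd y * \<rho> y = gd (\<theta> y) / J (\<theta> y)" using gd_pos[of y] by (simp add: \<rho>_def)
      then show "ennreal (F y) = ennreal (gd y) * (ennreal (\<rho> y) * indicator A y)"
        using gd_pos[of y] \<rho>pos[of y]
        by (simp add: F_def indicator_def ennreal_mult[symmetric] mult.assoc[symmetric])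
    qed
    also have "\<dots> = emeasure (density M (\<lambda>y. ennreal (\<rho> y))) A"
      by (simp add: emeasure_density Mdef nn_integral_density)
    finally show "emeasure N A = emeasure (density M (\<lambda>y. ennreal (\<rho> y))) A" .
  qed
  have ac: "absolutely_continuous M N"
    unfolding N_eq by (rule absolutely_continuousI_density) simp
  have sets_N: "sets N = sets M" by (simp add: Ndef)
  have RN: "AE y in M. ennreal (\<rho> y) = RN_deriv M N y"
    by (rule P.RN_deriv_unique) (simp_all add: N_eq)
  have ED: "AE y in N. entropy_density (exp 1) M N y = ln (\<rho> y)"
  proof -
    have "AE y in N. ennreal (\<rho> y) = RN_deriv M N y"
      by (rule absolutely_continuous_AE[OF sets_N ac RN])
    then show ?thesis
    proof eventually_elim
      case (elim y)
      then have "RN_deriv M N y = ennreal (\<rho> y)" by simp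
      then show ?case using \<rho>pos[of y] by (simp add: entropy_density_def log_def)
    qed
  qed
  define c where "c = (2 * pi) powr (- real DIM('a) / 2)"
  have c0: "0 < c" by (simp add: c_def)
  have lngd: "ln (gd y) = ln c - (norm y)\<^sup>2 / 2" for y :: 'a
  proof -
    have "gd y = c * exp (- (norm y)\<^sup>2 / 2)" by (simp add: gd_def c_def)
    then show ?thesis using c0 by (simp add: ln_mult)
  qed
  have Zeq: "ln (\<rho> (\<psi> x)) = x \<bullet> g x + (norm (g x))\<^sup>2 / 2 - ln (J x)" for x
  proof -
    have "\<rho> (\<psi> x) = gd x / (J x * gd (\<psi> x))" by (simp add: \<rho>_def)
    then have "ln (\<rho> (\<psi> x)) = ln (gd x) - (ln (J x) + ln (gd (\<psi> x)))"
      using gd_pos[of x] gd_pos[of "\<psi> x"] Jpos[of x] by (simp add: ln_div ln_mult)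
    moreover have "\<psi> x = x + g x" by (simp add: g_def)
    moreover have "(norm (x + g x))\<^sup>2 = (norm x)\<^sup>2 + 2 * (x \<bullet> g x) + (norm (g x))\<^sup>2"
      by (simp add: power2_norm_eq_inner inner_add_left inner_add_right inner_commute)
    ultimately show ?thesis by (simp add: lngd field_simps)
  qed
  have St: "integrable lborel (\<lambda>x. gd x * (g' x b \<bullet> b))
      \<and> integrable lborel (\<lambda>x. gd x * (x \<bullet> b) * (g x \<bullet> b))
      \<and> integral\<^sup>L lborel (\<lambda>x. gd x * (x \<bullet> b) * (g x \<bullet> b)) = integral\<^sup>L lborel (\<lambda>x. gd x * (g' x b \<bullet> b))"
    if b: "b \<in> Basis" for b
  proof -
    have hm: "(\<lambda>x. g x \<bullet> b) \<in> borel_measurable borel" by measurable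
    have hb: "\<bar>g x \<bullet> b\<bar> \<le> m1" for x using Basis_le_norm[OF b, of "g x"] gbnd[of x] by linarith
    have hlip: "\<bar>g (x + t *\<^sub>R b) \<bullet> b - g x \<bullet> b\<bar> \<le> m2 * \<bar>t\<bar>" for x t
    proof -
      have "\<bar>g (x + t *\<^sub>R b) \<bullet> b - g x \<bullet> b\<bar> = \<bar>(g (x + t *\<^sub>R b) - g x) \<bullet> b\<bar>" by (simp add: inner_diff_left)
      also have "\<dots> \<le> norm (g (x + t *\<^sub>R b) - g x)" by (rule Basis_le_norm[OF b])
      also have "\<dots> \<le> m2 * norm (x + t *\<^sub>R b - x)" by (rule glip)
      also have "norm (x + t *\<^sub>R b - x) = \<bar>t\<bar>" using b by simp
      finally show ?thesis .
    qed
    have hder: "((\<lambda>t. g (x + t *\<^sub>R b) \<bullet> b) has_real_derivative (g' x b \<bullet> b)) (at 0)" for x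
      by (rule dir_deriv[OF gder])
    show ?thesis using stein1[OF b hm hb hlip hder] by blast
  qed
  have e1: "gd x * (x \<bullet> g x) = (\<Sum>b\<in>Basis. gd x * (x \<bullet> b) * (g x \<bullet> b))" for x
    by (simp add: euclidean_inner[of x "g x"] sum_distrib_left mult.assoc)
  have e2: "gd x * tr x = (\<Sum>b\<in>Basis. gd x * (g' x b \<bullet> b))" for x
    by (simp add: tr_def sum_distrib_left)
  have int1: "integrable lborel (\<lambda>x. gd x * (x \<bullet> g x))"
    unfolding e1 using St by (intro Bochner_Integration.integrable_sum) blast
  have int4: "integrable lborel (\<lambda>x. gd x * tr x)"
    unfolding e2 using St by (intro Bochner_Integration.integrable_sum) blast
  have I14: "integral\<^sup>L lborel (\<lambda>x. gd x * (x \<bullet> g x)) = integral\<^sup>L lborel (\<lambda>x. gd x * tr x)"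
    unfolding e1 e2 using St by (simp add: Bochner_Integration.integral_sum)
  have int2: "integrable lborel (\<lambda>x. gd x * ((norm (g x))\<^sup>2 / 2))"
  proof (rule Bochner_Integration.integrable_bound[OF integrable_mult_right[OF integrable_gd, of "m1\<^sup>2 / 2"]])
    show "AE x in lborel. norm (gd x * ((norm (g x))\<^sup>2 / 2)) \<le> norm (m1\<^sup>2 / 2 * gd x)"
    proof (intro AE_I2)
      fix x
      have "(norm (g x))\<^sup>2 \<le> m1\<^sup>2" using gbnd[of x] by (simp add: power_mono)
      then show "norm (gd x * ((norm (g x))\<^sup>2 / 2)) \<le> norm (m1\<^sup>2 / 2 * gd x)"
        using gd_pos[of x] by (simp add: abs_mult mult.commute mult_left_mono)
    qed
  qed measurable
  have int3: "integrable lborel (\<lambda>x. gd x * ln (J x))"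
  proof (rule Bochner_Integration.integrable_bound[OF integrable_mult_right[OF integrable_gd, of C0]])
    show "AE x in lborel. norm (gd x * ln (J x)) \<le> norm (C0 * gd x)"
    proof (intro AE_I2)
      fix x
      have "0 \<le> C0" using lnJb[of 0] by linarith
      then show "norm (gd x * ln (J x)) \<le> norm (C0 * gd x)"
        using gd_pos[of x] lnJb[of x] by (simp add: abs_mult mult.commute mult_left_mono)
    qed
  qed measurable
  have gdZ: "gd x * ln (\<rho> (\<psi> x)) = gd x * (x \<bullet> g x) + gd x * ((norm (g x))\<^sup>2 / 2) - gd x * ln (J x)" for x
    by (simp add: Zeq algebra_simps)
  have intZl: "integrable lborel (\<lambda>x. gd x * ln (\<rho> (\<psi> x)))"
    unfolding gdZ using int1 int2 int3 by simp
  have Zm[measurable]: "(\<lambda>x. ln (\<rho> (\<psi> x))) \<in> borel_measurable borel" by measurable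
  have intZ: "integrable M (\<lambda>x. ln (\<rho> (\<psi> x)))"
    unfolding Mdef using intZl by (subst integrable_density) (auto simp: gd_pos less_imp_le)
  have intZN: "integrable N (\<lambda>y. ln (\<rho> y))"
    unfolding Ndef using intZ by (subst integrable_distr_eq) simp_all
  have measN: "measurable N = measurable borel" by (rule ext, rule measurable_cong_sets) (simp_all add: Ndef)
  have EDm: "entropy_density (exp 1) M N \<in> borel_measurable N"
    using measurable_entropy_density[of "exp 1" M N] by (simp add: measN)
  have lnm: "(\<lambda>y. ln (\<rho> y)) \<in> borel_measurable N" by (simp add: measN)
  have intED: "integrable N (entropy_density (exp 1) M N)"
    using integrable_cong_AE[OF EDm lnm ED] intZN by simp
  have "KL_divergence (exp 1) M N = integral\<^sup>L N (\<lambda>y. ln (\<rho> y))"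
    unfolding KL_divergence_def by (rule integral_cong_AE[OF EDm lnm ED])
  also have "\<dots> = integral\<^sup>L M (\<lambda>x. ln (\<rho> (\<psi> x)))"
    unfolding Ndef by (rule integral_distr) simp_all
  also have "\<dots> = integral\<^sup>L lborel (\<lambda>x. gd x * ln (\<rho> (\<psi> x)))"
    unfolding Mdef by (subst integral_density) (auto simp: gd_pos less_imp_le)
  also have "\<dots> = integral\<^sup>L lborel (\<lambda>x. gd x * (x \<bullet> g x)) + integral\<^sup>L lborel (\<lambda>x. gd x * ((norm (g x))\<^sup>2 / 2))
      - integral\<^sup>L lborel (\<lambda>x. gd x * ln (J x))"
    unfolding gdZ using int1 int2 int3 by simp
  also have "\<dots> = integral\<^sup>L lborel (\<lambda>x. gd x * tr x) + integral\<^sup>L lborel (\<lambda>x. gd x * ((norm (g x))\<^sup>2 / 2))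
      - integral\<^sup>L lborel (\<lambda>x. gd x * ln (J x))"
    by (simp add: I14)
  also have "\<dots> = integral\<^sup>L lborel (\<lambda>x. gd x * ((tr x - ln (J x)) + (norm (g x))\<^sup>2 / 2))"
    using int4 int2 int3 by (simp add: algebra_simps)
  also have "\<dots> \<le> integral\<^sup>L lborel (\<lambda>x::'a. gd x * (real DIM('a) * (m2\<^sup>2 / (2 * (1 - m2))) + m1\<^sup>2 / 2))"
  proof -
    have iA: "integrable lborel (\<lambda>x. gd x * ((tr x - ln (J x)) + (norm (g x))\<^sup>2 / 2))"
      using int4 int2 int3 by (simp add: algebra_simps)
    have iB: "integrable lborel (\<lambda>x::'a. gd x * (real DIM('a) * (m2\<^sup>2 / (2 * (1 - m2))) + m1\<^sup>2 / 2))"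
      by (intro integrable_mult_left integrable_gd)
    have mono: "gd x * ((tr x - ln (J x)) + (norm (g x))\<^sup>2 / 2) \<le> gd x * (real DIM('a) * (m2\<^sup>2 / (2 * (1 - m2))) + m1\<^sup>2 / 2)" for x
    proof -
      have "(norm (g x))\<^sup>2 \<le> m1\<^sup>2" using gbnd[of x] by (simp add: power_mono)
      then have "(tr x - ln (J x)) + (norm (g x))\<^sup>2 / 2 \<le> real DIM('a) * (m2\<^sup>2 / (2 * (1 - m2))) + m1\<^sup>2 / 2"
        using trJ[of x] by linarith
      then show ?thesis using gd_pos[of x] by (simp add: mult_left_mono)
    qed
    show ?thesis by (rule Bochner_Integration.integral_mono[OF iA iB mono])
  qed
  also have "\<dots> = real DIM('a) * (m2\<^sup>2 / (2 * (1 - m2))) + m1\<^sup>2 / 2"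
    using integral_gd[where 'a='a] by (simp add: mult.commute)
  finally have KL: "KL_divergence (exp 1) M N \<le> m1\<^sup>2 / 2 + real DIM('a) * m2\<^sup>2 / (2 * (1 - m2))"
    by simp
  show ?thesis using ac intED KL by (simp add: M_def N_def)
qed

end
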